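(* Let $z_1(x)=2e^{1-\frac{1}{1-(x/\pi)^2}}-1$ on $[-\pi,\pi]$ (with $z_1$ and all its derivatives extended continuously to $x=\pm\pi$), and let $\epsilon=\frac1{128}$. Then for each $k\in\{0,1,2,3,4,5\}$: for every $x\in[-\pi,-\pi+\epsilon]$, $\partial_x^k z_1(x)$ lies between $\partial_x^k z_1(-\pi)$ and $\partial_x^k z_1(-\pi+\epsilon)$ (in their convex hull), and for every $x\in[\pi-\epsilon,\pi]$, $\partial_x^k z_1(x)$ lies between $\partial_x^k z_1(\pi-\epsilon)$ and $\partial_x^k z_1(\pi)$. *)

theory Defs
  imports "HOL-Analysis.Analysis"
begin

text \<open>The function z1 on [-pi,pi]; at the endpoints (and outside) it is given its
continuous (indeed smooth) extension, the constant -1, so that the k-th derivative at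
x = +-pi is the continuous extension of the k-th derivative from the interior.\<close>
definition z1 :: "real \<Rightarrow> real" where
  "z1 x = (if \<bar>x\<bar> < pi then 2 * exp (1 - 1 / (1 - (x / pi)\<^sup>2)) - 1 else -1)"

definition eps :: real where
  "eps = 1 / 128"

definition between :: "real \<Rightarrow> real \<Rightarrow> real \<Rightarrow> bool" where
  "between a b v \<longleftrightarrow> min a b \<le> v \<and> v \<le> max a b"

end

theory Submission imports Defs begin
definition G :: "nat \<Rightarrow> nat \<Rightarrow> (real \<Rightarrow> real) \<Rightarrow> real \<Rightarrow> real" where
  "G a k P x = (if \<bar>x\<bar> < pi then exp (1 - 1 / (1 - (x/pi)\<^sup>2)) * (x/pi)^a * P (1 - (x/pi)\<^sup>2)
      / ((1 - (x/pi)\<^sup>2)^(2*k) * pi^k) else 0)"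
lemma exp_pow_bound:
  fixes t :: real assumes "0 \<le> t" shows "t^m / fact m \<le> exp t"
proof -
  have "(\<Sum>n\<in>{m}. inverse (fact n) * t^n) \<le> (\<Sum>n. inverse (fact n) * t^n)"
    by (rule sum_le_suminf[OF summable_exp]) (use assms in auto)
  then show ?thesis by (simp add: exp_def field_simps)
qed

lemma quad_deriv:
  fixes f :: "real \<Rightarrow> real"
  assumes "\<And>y. \<bar>f y - f x\<bar> \<le> C * (y - x)^2"
  shows "(f has_real_derivative 0) (at x)"
  unfolding DERIV_def
proof (rule Lim_null_comparison)
  show "\<forall>\<^sub>F h in at 0. norm ((f (x + h) - f x) / h) \<le> C * \<bar>h\<bar>"
  proof (rule always_eventually, intro allI)
    fix h :: real
    show "norm ((f (x + h) - f x) / h) \<le> C * \<bar>h\<bar>"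
    proof (cases "h = 0")
      case True
      have "0 \<le> C" using assms[of "x+1"] by simp
      then show ?thesis using True by simp
    next
      case False
      have "\<bar>f (x + h) - f x\<bar> \<le> C * h^2" using assms[of "x+h"] by simp
      then have "\<bar>f (x + h) - f x\<bar> / \<bar>h\<bar> \<le> C * h^2 / \<bar>h\<bar>"
        by (simp add: divide_right_mono)
      also have "C * h^2 / \<bar>h\<bar> = C * \<bar>h\<bar>"
      proof -
        have "h^2 = \<bar>h\<bar> * \<bar>h\<bar>" by (simp add: power2_eq_square)
        then show ?thesis using False by (simp only:) (simp add: field_simps)
      qed
      finally show ?thesis by (simp add: abs_div)
    qed
  qed
  show "((\<lambda>h. C * \<bar>h\<bar>) \<longlongrightarrow> 0) (at 0)"
    by (intro tendsto_mult_right_zero tendsto_rabs_zero tendsto_ident_at)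
qed


lemma r_bounds:
  assumes "\<bar>y\<bar> < pi"
  shows "0 < 1 - (y/pi)\<^sup>2" "1 - (y/pi)\<^sup>2 \<le> 1"
    "1 - (y/pi)\<^sup>2 \<le> 2 * \<bar>y - pi\<bar> / pi" "1 - (y/pi)\<^sup>2 \<le> 2 * \<bar>y + pi\<bar> / pi"
proof -
  have "\<bar>y/pi\<bar> < 1" using assms by simp
  then show "0 < 1 - (y/pi)\<^sup>2" by (simp add: abs_square_less_1)
  show "1 - (y/pi)\<^sup>2 \<le> 1" by simp
  have e: "1 - (y/pi)\<^sup>2 = (pi - y) * (pi + y) / pi^2"
    by (simp add: field_simps power2_eq_square)
  have "(pi - y) * (pi + y) \<le> \<bar>y - pi\<bar> * (2*pi)"
    using assms by (intro mult_mono) auto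
  then have "(pi - y) * (pi + y) / pi^2 \<le> \<bar>y - pi\<bar> * (2*pi) / pi^2"
    by (rule divide_right_mono) simp
  also have "\<dots> = 2 * \<bar>y - pi\<bar> / pi" by (simp add: power2_eq_square)
  finally show "1 - (y/pi)\<^sup>2 \<le> 2 * \<bar>y - pi\<bar> / pi" unfolding e .
  have "(pi - y) * (pi + y) \<le> (2*pi) * \<bar>y + pi\<bar>"
    using assms by (intro mult_mono) auto
  then have "(pi - y) * (pi + y) / pi^2 \<le> (2*pi) * \<bar>y + pi\<bar> / pi^2"
    by (rule divide_right_mono) simp
  also have "\<dots> = 2 * \<bar>y + pi\<bar> / pi" by (simp add: power2_eq_square)
  finally show "1 - (y/pi)\<^sup>2 \<le> 2 * \<bar>y + pi\<bar> / pi" unfolding e .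
qed

lemma G_bound:
  assumes M: "\<And>r. 0 \<le> r \<Longrightarrow> r \<le> 1 \<Longrightarrow> \<bar>P r\<bar> \<le> M"
  shows "\<bar>G a k P y\<bar> \<le> exp 1 * M * fact (2*k+2) * (1 - (y/pi)\<^sup>2)^2"
proof (cases "\<bar>y\<bar> < pi")
  case False
  have "0 \<le> M" using M[of 0] by simp
  then show ?thesis using False by (simp add: G_def)
next
  case True
  define r where "r = 1 - (y/pi)\<^sup>2"
  have r0: "0 < r" and r1: "r \<le> 1" using r_bounds[OF True] by (auto simp: r_def)
  have PM: "\<bar>P r\<bar> \<le> M" using M r0 r1 by simp
  have u: "\<bar>y/pi\<bar>^a \<le> 1" using True by (simp add: power_le_one)
  have pik: "1 \<le> pi^k" using pi_gt3 by (simp add: one_le_power)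
  have ex: "exp (1 - 1/r) \<le> exp 1 * fact (2*k+2) * r^(2*k+2)"
  proof -
    define m where "m = 2*k+2"
    have "(1/r)^m / fact m \<le> exp (1/r)" using r0 by (intro exp_pow_bound) simp
    then have b: "1 / (r^m * fact m) \<le> exp (1/r)" by (simp add: power_one_over)
    have "exp (1 - 1/r) = exp 1 / exp (1/r)" by (simp add: exp_diff)
    also have "\<dots> \<le> exp 1 / (1 / (r^m * fact m))"
      using b r0 by (intro divide_left_mono) auto
    also have "\<dots> = exp 1 * fact m * r^m" by simp
    finally show ?thesis by (simp add: m_def)
  qed
  have Gy: "G a k P y = exp (1 - 1/r) * (y/pi)^a * P r / (r^(2*k) * pi^k)"
    using True by (simp add: G_def r_def)
  have "\<bar>G a k P y\<bar> = exp (1 - 1/r) * \<bar>y/pi\<bar>^a * \<bar>P r\<bar> / (r^(2*k) * pi^k)"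
    unfolding Gy using r0 by (simp add: abs_mult power_abs)
  also have "\<dots> \<le> exp (1 - 1/r) * 1 * M / (r^(2*k) * 1)"
    using u PM pik r0 by (intro divide_mono mult_mono) auto
  also have "\<dots> \<le> exp 1 * fact (2*k+2) * r^(2*k+2) * M / r^(2*k)"
  proof -
    have M0: "0 \<le> M" using PM by linarith
    have "exp (1 - 1/r) * M \<le> exp 1 * fact (2*k+2) * r^(2*k+2) * M"
      by (rule mult_right_mono[OF ex M0])
    then have "exp (1 - 1/r) * M / r^(2*k) \<le> exp 1 * fact (2*k+2) * r^(2*k+2) * M / r^(2*k)"
      using r0 by (intro divide_right_mono) auto
    then show ?thesis by simp
  qed
  also have "\<dots> = exp 1 * M * fact (2*k+2) * r^2"
    using r0 by (simp add: power_add power2_eq_square field_simps)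
  finally show ?thesis by (simp add: r_def)
qed

lemma boundary:
  assumes Pc: "continuous_on {0..1} P" and x: "\<bar>x\<bar> = pi"
  shows "(G a k P has_real_derivative 0) (at x)"
proof -
  obtain M where M: "\<And>r. r \<in> {0..1} \<Longrightarrow> norm (P r) \<le> M"
    using continuous_on_compact_bound[OF compact_Icc Pc] by blast
  have M0: "0 \<le> M" using M[of 0] by simp
  have Gx: "G a k P x = 0" using x by (simp add: G_def)
  show ?thesis
  proof (rule quad_deriv[where C = "exp 1 * M * fact (2*k+2) * 4"])
    fix y
    show "\<bar>G a k P y - G a k P x\<bar> \<le> exp 1 * M * fact (2*k+2) * 4 * (y - x)^2"
    proof (cases "\<bar>y\<bar> < pi")
      case False
      then show ?thesis using M0 Gx by (simp add: G_def)
    next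
      case True
      have rb: "1 - (y/pi)\<^sup>2 \<le> 2 * \<bar>y - x\<bar> / pi"
      proof -
        have "x = pi \<or> x = -pi" using x by auto
        then show ?thesis using r_bounds(3,4)[OF True] by auto
      qed
      have "2 * \<bar>y - x\<bar> / pi \<le> 2 * \<bar>y - x\<bar> / 1"
        by (rule divide_left_mono) (use pi_gt3 in auto)
      then have "2 * \<bar>y - x\<bar> / pi \<le> 2 * \<bar>y - x\<bar>" by simp
      then have "(1 - (y/pi)\<^sup>2)^2 \<le> (2 * \<bar>y - x\<bar>)^2"
        using rb r_bounds(1)[OF True] by (intro power_mono) auto
      also have "\<dots> = 4 * (y - x)^2" by (simp add: power2_eq_square)
      finally have r2: "(1 - (y/pi)\<^sup>2)^2 \<le> 4 * (y - x)^2" .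
      have "\<bar>G a k P y\<bar> \<le> exp 1 * M * fact (2*k+2) * (1 - (y/pi)\<^sup>2)^2"
        using M by (intro G_bound) auto
      also have "\<dots> \<le> exp 1 * M * fact (2*k+2) * (4 * (y - x)^2)"
        using r2 M0 by (intro mult_left_mono) auto
      finally show ?thesis using Gx by simp
    qed
  qed
qed

lemma interior0:
  assumes P: "\<And>r. (P has_real_derivative P' r) (at r)"
    and Q: "\<And>r. Q r = -2*r^2 * P' r + 4*k*r*P r - 2 * P r"
    and x: "\<bar>x\<bar> < pi"
  shows "((\<lambda>x. exp (1 - 1 / (1 - (x/pi)\<^sup>2)) * (x/pi)^0 * P (1 - (x/pi)\<^sup>2)
      / ((1 - (x/pi)\<^sup>2)^(2*k) * pi^k)) has_real_derivative
     exp (1 - 1 / (1 - (x/pi)\<^sup>2)) * (x/pi)^1 * Q (1 - (x/pi)\<^sup>2)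
      / ((1 - (x/pi)\<^sup>2)^(2*Suc k) * pi^Suc k)) (at x)"
proof -
  have "\<bar>x/pi\<bar> < 1" using x by simp
  then have r: "1 - (x/pi)\<^sup>2 > 0" by (simp add: abs_square_less_1)
  then have r2: "(x/pi)\<^sup>2 \<noteq> 1" by simp
  define r where "r = 1 - (x/pi)\<^sup>2"
  define E where "E = exp (1 - 1 / (1 - (x/pi)\<^sup>2))"
  define A where "A = P (1 - (x/pi)\<^sup>2)"
  define B where "B = P' (1 - (x/pi)\<^sup>2)"
  define C where "C = Q (1 - (x/pi)\<^sup>2)"
  have rr: "r \<noteq> 0" using r r_def by simp
  show ?thesis
    apply (rule derivative_eq_intros refl P[THEN DERIV_chain2] | simp add: r r2)+
    apply (simp add: Q)
    apply (simp only: r_def[symmetric] E_def[symmetric] A_def[symmetric] B_def[symmetric] C_def[symmetric])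
    apply (cases k)
     apply (simp_all add: field_simps rr power2_eq_square)
    done
qed

lemma interior1:
  assumes P: "\<And>r. (P has_real_derivative P' r) (at r)"
    and Q: "\<And>r. Q r = P r * r^2 + (1 - r) * (-2*r^2 * P' r + 4*k*r*P r - 2 * P r)"
    and x: "\<bar>x\<bar> < pi"
  shows "((\<lambda>x. exp (1 - 1 / (1 - (x/pi)\<^sup>2)) * (x/pi)^1 * P (1 - (x/pi)\<^sup>2)
      / ((1 - (x/pi)\<^sup>2)^(2*k) * pi^k)) has_real_derivative
     exp (1 - 1 / (1 - (x/pi)\<^sup>2)) * (x/pi)^0 * Q (1 - (x/pi)\<^sup>2)
      / ((1 - (x/pi)\<^sup>2)^(2*Suc k) * pi^Suc k)) (at x)"
proof -
  have "\<bar>x/pi\<bar> < 1" using x by simp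
  then have r: "1 - (x/pi)\<^sup>2 > 0" by (simp add: abs_square_less_1)
  then have r2: "(x/pi)\<^sup>2 \<noteq> 1" by simp
  define r where "r = 1 - (x/pi)\<^sup>2"
  define E where "E = exp (1 - 1 / (1 - (x/pi)\<^sup>2))"
  define A where "A = P (1 - (x/pi)\<^sup>2)"
  define B where "B = P' (1 - (x/pi)\<^sup>2)"
  define C where "C = Q (1 - (x/pi)\<^sup>2)"
  have rr: "r \<noteq> 0" using r r_def by simp
  show ?thesis
    apply (rule derivative_eq_intros refl P[THEN DERIV_chain2] | simp add: r r2)+
    apply (simp add: Q)
    apply (simp only: r_def[symmetric] E_def[symmetric] A_def[symmetric] B_def[symmetric] C_def[symmetric])
    apply (cases k)
     apply (simp_all add: field_simps rr power2_eq_square)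
    done
qed


lemma Gder0:
  assumes P: "\<And>r. (P has_real_derivative P' r) (at r)"
    and Q: "\<And>r. Q r = -2*r^2 * P' r + 4*k*r*P r - 2 * P r"
  shows "(G 0 k P has_real_derivative G 1 (Suc k) Q x) (at x)"
proof -
  have Pc: "continuous_on {0..1} P"
    by (meson DERIV_isCont P continuous_at_imp_continuous_on)
  consider "\<bar>x\<bar> < pi" | "\<bar>x\<bar> = pi" | "\<bar>x\<bar> > pi" by linarith
  then show ?thesis
  proof cases
    case 1
    have e: "G 1 (Suc k) Q x = exp (1 - 1 / (1 - (x/pi)\<^sup>2)) * (x/pi)^1 * Q (1 - (x/pi)\<^sup>2)
      / ((1 - (x/pi)\<^sup>2)^(2*Suc k) * pi^Suc k)"
      unfolding G_def by (simp only: 1 if_True)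
    show ?thesis unfolding e
      by (rule has_field_derivative_transform_within_open[OF interior0[OF P Q 1], where S="{-pi<..<pi}"])
        (use 1 in \<open>auto simp: G_def abs_less_iff\<close>)
  next
    case 2
    then show ?thesis using boundary[OF Pc 2] by (simp add: G_def)
  next
    case 3
    have e: "G 1 (Suc k) Q x = 0" using 3 by (simp add: G_def)
    show ?thesis unfolding e
      by (rule has_field_derivative_transform_within_open[OF DERIV_const, where S="{..<-pi} \<union> {pi<..}"])
        (use 3 in \<open>auto simp: G_def abs_less_iff\<close>)
  qed
qed

lemma Gder1:
  assumes P: "\<And>r. (P has_real_derivative P' r) (at r)"
    and Q: "\<And>r. Q r = P r * r^2 + (1 - r) * (-2*r^2 * P' r + 4*k*r*P r - 2 * P r)"
  shows "(G 1 k P has_real_derivative G 0 (Suc k) Q x) (at x)"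
proof -
  have Pc: "continuous_on {0..1} P"
    by (meson DERIV_isCont P continuous_at_imp_continuous_on)
  consider "\<bar>x\<bar> < pi" | "\<bar>x\<bar> = pi" | "\<bar>x\<bar> > pi" by linarith
  then show ?thesis
  proof cases
    case 1
    have e: "G 0 (Suc k) Q x = exp (1 - 1 / (1 - (x/pi)\<^sup>2)) * (x/pi)^0 * Q (1 - (x/pi)\<^sup>2)
      / ((1 - (x/pi)\<^sup>2)^(2*Suc k) * pi^Suc k)"
      unfolding G_def by (simp only: 1 if_True)
    show ?thesis unfolding e
      by (rule has_field_derivative_transform_within_open[OF interior1[OF P Q 1], where S="{-pi<..<pi}"])
        (use 1 in \<open>auto simp: G_def abs_less_iff\<close>)
  next
    case 2
    then show ?thesis using boundary[OF Pc 2] by (simp add: G_def)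
  next
    case 3
    have e: "G 0 (Suc k) Q x = 0" using 3 by (simp add: G_def)
    show ?thesis unfolding e
      by (rule has_field_derivative_transform_within_open[OF DERIV_const, where S="{..<-pi} \<union> {pi<..}"])
        (use 3 in \<open>auto simp: G_def abs_less_iff\<close>)
  qed
qed

definition P0 :: "real \<Rightarrow> real" where "P0 = (\<lambda>r::real. 2)"
definition D0 :: "real \<Rightarrow> real" where "D0 = (\<lambda>r::real. 0)"
lemma P0_der: "(P0 has_real_derivative D0 r) (at r)"
  unfolding P0_def D0_def by (rule derivative_eq_intros refl | simp)+

definition P1 :: "real \<Rightarrow> real" where "P1 = (\<lambda>r::real. - 4)"
definition D1 :: "real \<Rightarrow> real" where "D1 = (\<lambda>r::real. 0)"
lemma P1_der: "(P1 has_real_derivative D1 r) (at r)"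
  unfolding P1_def D1_def by (rule derivative_eq_intros refl | simp)+

definition P2 :: "real \<Rightarrow> real" where "P2 = (\<lambda>r::real. 8 - 24*r + 12*r^2)"
definition D2 :: "real \<Rightarrow> real" where "D2 = (\<lambda>r::real. - 24 + 24*r)"
lemma P2_der: "(P2 has_real_derivative D2 r) (at r)"
  unfolding P2_def D2_def by (rule derivative_eq_intros refl | simp)+

definition P3 :: "real \<Rightarrow> real" where "P3 = (\<lambda>r::real. - 16 + 112*r - 168*r^2 + 48*r^3)"
definition D3 :: "real \<Rightarrow> real" where "D3 = (\<lambda>r::real. 112 - 336*r + 144*r^2)"
lemma P3_der: "(P3 has_real_derivative D3 r) (at r)"
  unfolding P3_def D3_def by (rule derivative_eq_intros refl | simp)+

definition P4 :: "real \<Rightarrow> real" where "P4 = (\<lambda>r::real. 32 - 448*r + 1856*r^2 - 2784*r^3 + 1560*r^4 - 240*r^5)"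
definition D4 :: "real \<Rightarrow> real" where "D4 = (\<lambda>r::real. - 448 + 3712*r - 8352*r^2 + 6240*r^3 - 1200*r^4)"
lemma P4_der: "(P4 has_real_derivative D4 r) (at r)"
  unfolding P4_def D4_def by (rule derivative_eq_intros refl | simp)+

definition P5 :: "real \<Rightarrow> real" where "P5 = (\<lambda>r::real. - 64 + 1408*r - 9984*r^2 + 27840*r^3 - 30960*r^4 + 12960*r^5 - 1440*r^6)"
definition D5 :: "real \<Rightarrow> real" where "D5 = (\<lambda>r::real. 1408 - 19968*r + 83520*r^2 - 123840*r^3 + 64800*r^4 - 8640*r^5)"
lemma P5_der: "(P5 has_real_derivative D5 r) (at r)"
  unfolding P5_def D5_def by (rule derivative_eq_intros refl | simp)+

definition P6 :: "real \<Rightarrow> real" where "P6 = (\<lambda>r::real. 128 - 4224*r + 49344*r^2 - 259328*r^3 + 657120*r^4 - 821280*r^5 + 498960*r^6 - 131040*r^7 + 10080*r^8)"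
definition D6 :: "real \<Rightarrow> real" where "D6 = (\<lambda>r::real. - 4224 + 98688*r - 777984*r^2 + 2628480*r^3 - 4106400*r^4 + 2993760*r^5 - 917280*r^6 + 80640*r^7)"
lemma P6_der: "(P6 has_real_derivative D6 r) (at r)"
  unfolding P6_def D6_def by (rule derivative_eq_intros refl | simp)+

lemma Gder0':
  assumes P: "\<And>r. (P has_real_derivative P' r) (at r)"
    and Q: "\<And>r. Q r = -2*r^2 * P' r + 4*k*r*P r - 2 * P r"
  and k': "k' = Suc k"
  shows "(G 0 k P has_real_derivative G 1 k' Q x) (at x)"
  using Gder0[OF P Q, of x] k' by simp

lemma Gder1':
  assumes P: "\<And>r. (P has_real_derivative P' r) (at r)"
    and Q: "\<And>r. Q r = P r * r^2 + (1 - r) * (-2*r^2 * P' r + 4*k*r*P r - 2 * P r)"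
  and k': "k' = Suc k"
  shows "(G 1 k P has_real_derivative G 0 k' Q x) (at x)"
  using Gder1[OF P Q, of x] k' by simp

lemma Q0: "P1 r = -2*r^2 * D0 r + 4*0*r*P0 r - 2 * P0 r"
  unfolding P0_def P1_def D0_def by (simp add: algebra_simps power2_eq_square power3_eq_cube power_numeral_reduce)

lemma F0_der: "(G 0 0 P0 has_real_derivative G 1 1 P1 x) (at x)"
  by (rule Gder0'[OF P0_der]) (simp_all add: Q0)

lemma Q1: "P2 r = P1 r * r^2 + (1 - r) * (-2*r^2 * D1 r + 4*1*r*P1 r - 2 * P1 r)"
  unfolding P1_def P2_def D1_def by (simp add: algebra_simps power2_eq_square power3_eq_cube power_numeral_reduce)

lemma F1_der: "(G 1 1 P1 has_real_derivative G 0 2 P2 x) (at x)"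
  by (rule Gder1'[OF P1_der]) (simp_all add: Q1)

lemma Q2: "P3 r = -2*r^2 * D2 r + 4*2*r*P2 r - 2 * P2 r"
  unfolding P2_def P3_def D2_def by (simp add: algebra_simps power2_eq_square power3_eq_cube power_numeral_reduce)

lemma F2_der: "(G 0 2 P2 has_real_derivative G 1 3 P3 x) (at x)"
  by (rule Gder0'[OF P2_der]) (simp_all add: Q2)

lemma Q3: "P4 r = P3 r * r^2 + (1 - r) * (-2*r^2 * D3 r + 4*3*r*P3 r - 2 * P3 r)"
  unfolding P3_def P4_def D3_def by (simp add: algebra_simps power2_eq_square power3_eq_cube power_numeral_reduce)

lemma F3_der: "(G 1 3 P3 has_real_derivative G 0 4 P4 x) (at x)"
  by (rule Gder1'[OF P3_der]) (simp_all add: Q3)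

lemma Q4: "P5 r = -2*r^2 * D4 r + 4*4*r*P4 r - 2 * P4 r"
  unfolding P4_def P5_def D4_def by (simp add: algebra_simps power2_eq_square power3_eq_cube power_numeral_reduce)

lemma F4_der: "(G 0 4 P4 has_real_derivative G 1 5 P5 x) (at x)"
  by (rule Gder0'[OF P4_der]) (simp_all add: Q4)

lemma Q5: "P6 r = P5 r * r^2 + (1 - r) * (-2*r^2 * D5 r + 4*5*r*P5 r - 2 * P5 r)"
  unfolding P5_def P6_def D5_def by (simp add: algebra_simps power2_eq_square power3_eq_cube power_numeral_reduce)

lemma F5_der: "(G 1 5 P5 has_real_derivative G 0 6 P6 x) (at x)"
  by (rule Gder1'[OF P5_der]) (simp_all add: Q5)


lemma pw: "0 \<le> r \<Longrightarrow> r \<le> 1/192 \<Longrightarrow> r^Suc n \<le> r * (1/192::real)^n"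
  by (simp add: mult_left_mono power_mono)

lemma P1_sign: assumes r: "0 < r" "r \<le> 1/192" shows "P1 r \<le> 0"
  by (simp add: P1_def)

lemma P2_sign: assumes r: "0 < r" "r \<le> 1/192" shows "0 \<le> P2 r"
proof -
  have h2: "r^2 \<le> r / 192" using pw[of r 1, OF less_imp_le[OF r(1)] r(2)] by (simp add: field_simps power2_eq_square)
  have g2: "0 \<le> r^2" using r by simp
  show ?thesis using h2 g2 r by (simp add: P2_def; linarith)
qed

lemma P3_sign: assumes r: "0 < r" "r \<le> 1/192" shows "P3 r \<le> 0"
proof -
  have h2: "r^2 \<le> r / 192" using pw[of r 1, OF less_imp_le[OF r(1)] r(2)] by (simp add: field_simps power2_eq_square)
  have g2: "0 \<le> r^2" using r by simp
  have h3: "r^3 \<le> r / 36864" using pw[of r 2, OF less_imp_le[OF r(1)] r(2)] by (simp add: field_simps power2_eq_square)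
  have g3: "0 \<le> r^3" using r by simp
  show ?thesis using h2 g2 h3 g3 r by (simp add: P3_def; linarith)
qed

lemma P4_sign: assumes r: "0 < r" "r \<le> 1/192" shows "0 \<le> P4 r"
proof -
  have h2: "r^2 \<le> r / 192" using pw[of r 1, OF less_imp_le[OF r(1)] r(2)] by (simp add: field_simps power2_eq_square)
  have g2: "0 \<le> r^2" using r by simp
  have h3: "r^3 \<le> r / 36864" using pw[of r 2, OF less_imp_le[OF r(1)] r(2)] by (simp add: field_simps power2_eq_square)
  have g3: "0 \<le> r^3" using r by simp
  have h4: "r^4 \<le> r / 7077888" using pw[of r 3, OF less_imp_le[OF r(1)] r(2)] by (simp add: field_simps power2_eq_square)
  have g4: "0 \<le> r^4" using r by simp
  have h5: "r^5 \<le> r / 1358954496" using pw[of r 4, OF less_imp_le[OF r(1)] r(2)] by (simp add: field_simps power2_eq_square)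
  have g5: "0 \<le> r^5" using r by simp
  show ?thesis using h2 g2 h3 g3 h4 g4 h5 g5 r by (simp add: P4_def; linarith)
qed

lemma P5_sign: assumes r: "0 < r" "r \<le> 1/192" shows "P5 r \<le> 0"
proof -
  have h2: "r^2 \<le> r / 192" using pw[of r 1, OF less_imp_le[OF r(1)] r(2)] by (simp add: field_simps power2_eq_square)
  have g2: "0 \<le> r^2" using r by simp
  have h3: "r^3 \<le> r / 36864" using pw[of r 2, OF less_imp_le[OF r(1)] r(2)] by (simp add: field_simps power2_eq_square)
  have g3: "0 \<le> r^3" using r by simp
  have h4: "r^4 \<le> r / 7077888" using pw[of r 3, OF less_imp_le[OF r(1)] r(2)] by (simp add: field_simps power2_eq_square)
  have g4: "0 \<le> r^4" using r by simp
  have h5: "r^5 \<le> r / 1358954496" using pw[of r 4, OF less_imp_le[OF r(1)] r(2)] by (simp add: field_simps power2_eq_square)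
  have g5: "0 \<le> r^5" using r by simp
  have h6: "r^6 \<le> r / 260919263232" using pw[of r 5, OF less_imp_le[OF r(1)] r(2)] by (simp add: field_simps power2_eq_square)
  have g6: "0 \<le> r^6" using r by simp
  show ?thesis using h2 g2 h3 g3 h4 g4 h5 g5 h6 g6 r by (simp add: P5_def; linarith)
qed

lemma P6_sign: assumes r: "0 < r" "r \<le> 1/192" shows "0 \<le> P6 r"
proof -
  have h2: "r^2 \<le> r / 192" using pw[of r 1, OF less_imp_le[OF r(1)] r(2)] by (simp add: field_simps power2_eq_square)
  have g2: "0 \<le> r^2" using r by simp
  have h3: "r^3 \<le> r / 36864" using pw[of r 2, OF less_imp_le[OF r(1)] r(2)] by (simp add: field_simps power2_eq_square)
  have g3: "0 \<le> r^3" using r by simp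
  have h4: "r^4 \<le> r / 7077888" using pw[of r 3, OF less_imp_le[OF r(1)] r(2)] by (simp add: field_simps power2_eq_square)
  have g4: "0 \<le> r^4" using r by simp
  have h5: "r^5 \<le> r / 1358954496" using pw[of r 4, OF less_imp_le[OF r(1)] r(2)] by (simp add: field_simps power2_eq_square)
  have g5: "0 \<le> r^5" using r by simp
  have h6: "r^6 \<le> r / 260919263232" using pw[of r 5, OF less_imp_le[OF r(1)] r(2)] by (simp add: field_simps power2_eq_square)
  have g6: "0 \<le> r^6" using r by simp
  have h7: "r^7 \<le> r / 50096498540544" using pw[of r 6, OF less_imp_le[OF r(1)] r(2)] by (simp add: field_simps power2_eq_square)
  have g7: "0 \<le> r^7" using r by simp
  have h8: "r^8 \<le> r / 9618527719784448" using pw[of r 7, OF less_imp_le[OF r(1)] r(2)] by (simp add: field_simps power2_eq_square)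
  have g8: "0 \<le> r^8" using r by simp
  show ?thesis using h2 g2 h3 g3 h4 g4 h5 g5 h6 g6 h7 g7 h8 g8 r by (simp add: P6_def; linarith)
qed


lemma z1_eq: "z1 = (\<lambda>x. G 0 0 P0 x - 1)"
  by (rule ext) (simp add: z1_def G_def P0_def)

lemma F0'_der: "((\<lambda>x. G 0 0 P0 x - 1) has_real_derivative G 1 1 P1 x) (at x)"
proof -
  have "((\<lambda>x. G 0 0 P0 x - 1) has_real_derivative G 1 1 P1 x - 0) (at x)"
    by (intro DERIV_diff F0_der DERIV_const)
  then show ?thesis by simp
qed

lemma deriv_step: "(deriv^^n) z1 = f \<Longrightarrow> (\<And>x. (f has_real_derivative g x) (at x)) \<Longrightarrow> (deriv^^Suc n) z1 = g"
  by (simp add: DERIV_imp_deriv ext)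

lemma d0: "(deriv^^0) z1 = (\<lambda>x. G 0 0 P0 x - 1)" by (simp add: z1_eq)
lemma d1: "(deriv^^1) z1 = G 1 1 P1" using deriv_step[OF d0 F0'_der] by simp
lemma d2: "(deriv^^2) z1 = G 0 2 P2" using deriv_step[OF d1 F1_der] by (simp add: eval_nat_numeral)
lemma d3: "(deriv^^3) z1 = G 1 3 P3" using deriv_step[OF d2 F2_der] by (simp add: eval_nat_numeral)
lemma d4: "(deriv^^4) z1 = G 0 4 P4" using deriv_step[OF d3 F3_der] by (simp add: eval_nat_numeral)
lemma d5: "(deriv^^5) z1 = G 1 5 P5" using deriv_step[OF d4 F4_der] by (simp add: eval_nat_numeral)


lemma between_up:
  assumes d: "\<And>x. (f has_real_derivative f' x) (at x)" and ab: "a \<le> b"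
    and s: "\<And>x. a \<le> x \<Longrightarrow> x \<le> b \<Longrightarrow> 0 \<le> f' x"
  shows "\<forall>x\<in>{a..b}. between (f a) (f b) (f x)"
proof
  fix x assume x: "x \<in> {a..b}"
  have D: "\<And>t. a \<le> t \<Longrightarrow> t \<le> b \<Longrightarrow> \<exists>y. DERIV f t :> y \<and> 0 \<le> y" using d s by blast
  have "f a \<le> f x"
    by (rule DERIV_nonneg_imp_nondecreasing[of a x f]) (use x D in \<open>auto intro: D\<close>)
  moreover have "f x \<le> f b"
    by (rule DERIV_nonneg_imp_nondecreasing[of x b f]) (use x D in \<open>auto intro: D\<close>)
  ultimately show "between (f a) (f b) (f x)" by (simp add: between_def)
qed

lemma between_down:
  assumes d: "\<And>x. (f has_real_derivative f' x) (at x)" and ab: "a \<le> b"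
    and s: "\<And>x. a \<le> x \<Longrightarrow> x \<le> b \<Longrightarrow> f' x \<le> 0"
  shows "\<forall>x\<in>{a..b}. between (f a) (f b) (f x)"
proof
  fix x assume x: "x \<in> {a..b}"
  have D: "\<And>t. a \<le> t \<Longrightarrow> t \<le> b \<Longrightarrow> \<exists>y. DERIV f t :> y \<and> y \<le> 0" using d s by blast
  have "f x \<le> f a"
    by (rule DERIV_nonpos_imp_nonincreasing[of a x f]) (use x D in \<open>auto intro: D\<close>)
  moreover have "f b \<le> f x"
    by (rule DERIV_nonpos_imp_nonincreasing[of x b f]) (use x D in \<open>auto intro: D\<close>)
  ultimately show "between (f a) (f b) (f x)" by (simp add: between_def)
qed

lemma small_r:
  assumes "\<bar>x\<bar> < pi" and "\<bar>x - pi\<bar> \<le> eps \<or> \<bar>x + pi\<bar> \<le> eps"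
  shows "0 < 1 - (x/pi)\<^sup>2" "1 - (x/pi)\<^sup>2 \<le> 1/192"
proof -
  show "0 < 1 - (x/pi)\<^sup>2" using r_bounds(1)[OF assms(1)] .
  have d: "2 * eps / pi \<le> 1/192"
  proof -
    have "2 * eps / pi \<le> 2 * eps / 3"
      by (rule divide_left_mono) (use pi_gt3 in \<open>auto simp: eps_def\<close>)
    then show ?thesis by (simp add: eps_def)
  qed
  have "1 - (x/pi)\<^sup>2 \<le> 2 * eps / pi"
    using assms(2)
  proof
    assume h: "\<bar>x - pi\<bar> \<le> eps"
    have "2 * \<bar>x - pi\<bar> / pi \<le> 2 * eps / pi" using h by (simp add: divide_right_mono)
    then show ?thesis using r_bounds(3)[OF assms(1)] by linarith
  next
    assume h: "\<bar>x + pi\<bar> \<le> eps"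
    have "2 * \<bar>x + pi\<bar> / pi \<le> 2 * eps / pi" using h by (simp add: divide_right_mono)
    then show ?thesis using r_bounds(4)[OF assms(1)] by linarith
  qed
  then show "1 - (x/pi)\<^sup>2 \<le> 1/192" using d by linarith
qed

lemma G_sign:
  assumes "\<bar>x\<bar> < pi \<Longrightarrow> 0 \<le> (x/pi)^a * P (1 - (x/pi)\<^sup>2)"
  shows "0 \<le> G a k P x"
proof (cases "\<bar>x\<bar> < pi")
  case True
  have r: "0 < 1 - (x/pi)\<^sup>2" using r_bounds(1)[OF True] .
  have "G a k P x = exp (1 - 1 / (1 - (x/pi)\<^sup>2)) * ((x/pi)^a * P (1 - (x/pi)\<^sup>2))
      / ((1 - (x/pi)\<^sup>2)^(2*k) * pi^k)"
    using True by (simp add: G_def mult.assoc)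
  also have "0 \<le> \<dots>" using assms[OF True] r by simp
  finally show ?thesis .
qed (simp add: G_def)

lemma G_sign':
  assumes "\<bar>x\<bar> < pi \<Longrightarrow> (x/pi)^a * P (1 - (x/pi)\<^sup>2) \<le> 0"
  shows "G a k P x \<le> 0"
proof (cases "\<bar>x\<bar> < pi")
  case True
  have r: "0 < 1 - (x/pi)\<^sup>2" using r_bounds(1)[OF True] .
  have "G a k P x = exp (1 - 1 / (1 - (x/pi)\<^sup>2)) * ((x/pi)^a * P (1 - (x/pi)\<^sup>2))
      / ((1 - (x/pi)\<^sup>2)^(2*k) * pi^k)"
    using True by (simp add: G_def mult.assoc)
  also have "\<dots> \<le> 0" using assms[OF True] r
    by (simp add: divide_nonpos_pos mult_nonneg_nonpos)
  finally show ?thesis .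
qed (simp add: G_def)

lemma right_pos:
  assumes "\<And>r. 0 < r \<Longrightarrow> r \<le> 1/192 \<Longrightarrow> 0 \<le> P r" "pi - eps \<le> x" "x \<le> pi"
  shows "0 \<le> G a k P x"
proof (rule G_sign)
  assume x: "\<bar>x\<bar> < pi"
  have e: "\<bar>x - pi\<bar> \<le> eps" using assms(2,3) by (simp add: eps_def)
  have "0 \<le> x" using assms(2) pi_gt3 by (simp add: eps_def)
  then show "0 \<le> (x/pi)^a * P (1 - (x/pi)\<^sup>2)"
    using assms(1) small_r[OF x] e by simp
qed

lemma right_neg:
  assumes "\<And>r. 0 < r \<Longrightarrow> r \<le> 1/192 \<Longrightarrow> P r \<le> 0" "pi - eps \<le> x" "x \<le> pi"
  shows "G a k P x \<le> 0"
proof (rule G_sign')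
  assume x: "\<bar>x\<bar> < pi"
  have e: "\<bar>x - pi\<bar> \<le> eps" using assms(2,3) by (simp add: eps_def)
  have "0 \<le> x" using assms(2) pi_gt3 by (simp add: eps_def)
  then show "(x/pi)^a * P (1 - (x/pi)\<^sup>2) \<le> 0"
    using assms(1) small_r[OF x] e by (simp add: mult_nonneg_nonpos)
qed

lemma left0:
  assumes "\<And>r. 0 < r \<Longrightarrow> r \<le> 1/192 \<Longrightarrow> 0 \<le> P r" "-pi \<le> x" "x \<le> -pi + eps"
  shows "0 \<le> G 0 k P x"
proof (rule G_sign)
  assume x: "\<bar>x\<bar> < pi"
  have e: "\<bar>x + pi\<bar> \<le> eps" using assms(2,3) by (simp add: eps_def)
  then show "0 \<le> (x/pi)^0 * P (1 - (x/pi)\<^sup>2)"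
    using assms(1) small_r[OF x] e by simp
qed

lemma left1:
  assumes "\<And>r. 0 < r \<Longrightarrow> r \<le> 1/192 \<Longrightarrow> P r \<le> 0" "-pi \<le> x" "x \<le> -pi + eps"
  shows "0 \<le> G 1 k P x"
proof (rule G_sign)
  assume x: "\<bar>x\<bar> < pi"
  have e: "\<bar>x + pi\<bar> \<le> eps" using assms(2,3) by (simp add: eps_def)
  have "x \<le> 0" using assms(3) pi_gt3 by (simp add: eps_def)
  then show "0 \<le> (x/pi)^1 * P (1 - (x/pi)\<^sup>2)"
    using assms(1) small_r[OF x] e by (simp add: mult_nonpos_nonpos divide_nonpos_pos)
qed

lemma epsle: "-pi \<le> -pi + eps" "pi - eps \<le> pi" by (simp_all add: eps_def)

theorem corollary2:
  fixes k :: nat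
  assumes "k \<le> 5"
  shows "(\<forall>x \<in> {-pi .. -pi + eps}.
            between ((deriv ^^ k) z1 (-pi)) ((deriv ^^ k) z1 (-pi + eps)) ((deriv ^^ k) z1 x))
       \<and> (\<forall>x \<in> {pi - eps .. pi}.
            between ((deriv ^^ k) z1 (pi - eps)) ((deriv ^^ k) z1 pi) ((deriv ^^ k) z1 x))"
proof -
  have "k = 0 \<or> k = 1 \<or> k = 2 \<or> k = 3 \<or> k = 4 \<or> k = 5" using assms by auto
  then show ?thesis
  proof (elim disjE)
    assume k: "k = 0"
    show ?thesis unfolding k d0
      by (intro conjI between_up[OF F0'_der epsle(1)] between_down[OF F0'_der epsle(2)]
          left1 right_neg P1_sign) auto
  next
    assume k: "k = 1"
    show ?thesis unfolding k d1
      by (intro conjI between_up[OF F1_der epsle(1)] between_up[OF F1_der epsle(2)]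
          left0 right_pos P2_sign) auto
  next
    assume k: "k = 2"
    show ?thesis unfolding k d2
      by (intro conjI between_up[OF F2_der epsle(1)] between_down[OF F2_der epsle(2)]
          left1 right_neg P3_sign) auto
  next
    assume k: "k = 3"
    show ?thesis unfolding k d3
      by (intro conjI between_up[OF F3_der epsle(1)] between_up[OF F3_der epsle(2)]
          left0 right_pos P4_sign) auto
  next
    assume k: "k = 4"
    show ?thesis unfolding k d4
      by (intro conjI between_up[OF F4_der epsle(1)] between_down[OF F4_der epsle(2)]
          left1 right_neg P5_sign) auto
  next
    assume k: "k = 5"
    show ?thesis unfolding k d5
      by (intro conjI between_up[OF F5_der epsle(1)] between_up[OF F5_der epsle(2)]
          left0 right_pos P6_sign) auto
  qed
qed

end
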